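(* Let $0\le\lambda<1$ and let $Y_1,Y_2,\ldots$ be independent and identically distributed Poisson random variables with mean $\lambda$, i.e. $\Pr(Y_i=y)=\frac{\lambda^y}{y!}e^{-\lambda}$ for $y=0,1,2,\ldots$. Define the random variable $X$ by $X=0$ if $Y_1=0$, and otherwise $$X=\min\Big\{z\ge 1:\ \sum_{i=1}^{z}Y_i\le z\Big\}.$$ Then $X$ is almost surely finite, with distribution $$\Pr(X=x)=\begin{cases} e^{-\lambda}, & x=0,\\ \lambda e^{-\lambda}, & x=1,\\ \dfrac{(x-1)^{x-2}}{x\,(x-2)!}\lambda^{x}e^{-x\lambda}, & x\ge 2,\end{cases}$$ and its first two moments are $$\mathbb{E}[X]=\frac{\lambda}{1-\lambda}e^{-\lambda},\qquad \mathbb{E}[X^2]=\frac{1-\lambda+\lambda^2}{(1-\lambda)^2}\,\mathbb{E}[X].$$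
   Context: Interpretation (not needed for the statement): time is divided into slots, each containing one coded packet on the redundancy path; $Y_i$ is the number of packets lost in slot $i$ after the last decoding event, with Poisson approximation of mean $\lambda=\epsilon_c+\sum_{i\in\mathcal{P}}\alpha_i\epsilon_i$, where $\epsilon_c$ is the erasure probability of the path carrying coded packets and $\alpha_i$ is the number of information packets sent on path $i$ per coded packet; $X$ is the number of slots between consecutive decoding events. *)

theory Defs
  imports "HOL-Probability.Probability"
begin

text \<open>X = 0 if Y 1 = 0, otherwise the least z >= 1 with Y 1 + ... + Y z <= z.
  (On the null event where no such z exists, LEAST yields an unspecified value.)\<close>
definition decode_slots :: "(nat \<Rightarrow> 'a \<Rightarrow> nat) \<Rightarrow> 'a \<Rightarrow> nat" where
  "decode_slots Y \<omega> =
     (if Y 1 \<omega> = 0 then 0 else (LEAST z. 1 \<le> z \<and> (\<Sum>i=1..z. Y i \<omega>) \<le> z))"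

end

theory Submission
  imports Defs
begin


fun Fp :: "(nat \<Rightarrow> real) \<Rightarrow> nat \<Rightarrow> nat \<Rightarrow> real" where
  "Fp p m 0 = (if m = 0 then 1 else 0)"
| "Fp p 0 (Suc n) = 0"
| "Fp p (Suc m) (Suc n) = (\<Sum>y\<le>n. p y * Fp p (m + y) n)"

lemma Fp_zero: "n < m \<Longrightarrow> Fp p m n = 0"
proof (induction n arbitrary: m)
  case 0 then show ?case by simp
next
  case (Suc n)
  then obtain m' where m: "m = Suc m'" by (cases m) auto
  have "\<And>y. Fp p (m' + y) n = 0" using Suc.IH Suc.prems by (simp add: m)
  then show ?case by (simp add: m)
qed

lemma Fp_0_left: "Fp p 0 n = (if n = 0 then 1 else 0)"
  by (cases n) auto

lemma Fp_nonneg: "(\<And>y. 0 \<le> p y) \<Longrightarrow> 0 \<le> Fp p m n"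
proof (induction n arbitrary: m)
  case 0 then show ?case by simp
next
  case (Suc n) then show ?case by (cases m) (auto intro!: sum_nonneg)
qed

lemma Fp_Suc_ext: "n \<le> N \<Longrightarrow> Fp p (Suc m) (Suc n) = (\<Sum>y\<le>N. p y * Fp p (m + y) n)"
proof -
  assume "n \<le> N"
  have "(\<Sum>y\<le>N. p y * Fp p (m + y) n) = (\<Sum>y\<le>n. p y * Fp p (m + y) n)"
    using \<open>n \<le> N\<close> by (intro sum.mono_neutral_right) (auto simp: Fp_zero)
  then show ?thesis by simp
qed

lemma Fp_conv: "Fp p (a + b) n = (\<Sum>j\<le>n. Fp p a j * Fp p b (n - j))"
proof (induction n arbitrary: a b)
  case 0 then show ?case by simp
next
  case (Suc n)
  show ?case
  proof (cases a)
    case 0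
    have "(\<Sum>j\<le>Suc n. Fp p 0 j * Fp p b (Suc n - j)) = (\<Sum>j\<in>{0}. Fp p 0 j * Fp p b (Suc n - j))"
      by (intro sum.mono_neutral_right) (auto simp: Fp_0_left)
    then show ?thesis using 0 by simp
  next
    case (Suc a')
    have "(\<Sum>j\<le>Suc n. Fp p a j * Fp p b (Suc n - j)) = (\<Sum>j\<le>n. Fp p a (Suc j) * Fp p b (n - j))"
      by (subst sum.atMost_Suc_shift) (simp add: Suc)
    also have "\<dots> = (\<Sum>j\<le>n. (\<Sum>y\<le>n. p y * Fp p (a' + y) j) * Fp p b (n - j))"
      unfolding Suc apply (intro sum.cong refl)
      subgoal for j using Fp_Suc_ext[of j n p a'] by simp
      done
    also have "\<dots> = (\<Sum>y\<le>n. p y * (\<Sum>j\<le>n. Fp p (a' + y) j * Fp p b (n - j)))"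
      by (simp add: sum_distrib_left sum_distrib_right mult.assoc) (rule sum.swap)
    also have "\<dots> = (\<Sum>y\<le>n. p y * Fp p (a' + b + y) n)"
      apply (intro sum.cong refl)
      subgoal for y using Suc.IH[of "a' + y" b] by (simp add: ac_simps)
      done
    also have "\<dots> = Fp p (a + b) (Suc n)" by (simp add: Suc)
    finally show ?thesis ..
  qed
qed




definition Up :: "(nat \<Rightarrow> real) \<Rightarrow> nat \<Rightarrow> nat \<Rightarrow> real" where
  "Up p m N = (\<Sum>n\<le>N. Fp p m n)"

lemma Up_0_left: "Up p 0 N = 1"
proof -
  have "Up p 0 N = (\<Sum>n\<in>{0}. Fp p 0 n)"
    unfolding Up_def by (intro sum.mono_neutral_right) (auto simp: Fp_0_left)
  then show ?thesis by simp
qed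

lemma Up_Suc: "Up p (Suc m) (Suc N) = (\<Sum>y\<le>N. p y * Up p (m + y) N)"
proof -
  have "Up p (Suc m) (Suc N) = (\<Sum>n\<le>N. Fp p (Suc m) (Suc n))"
    unfolding Up_def by (subst sum.atMost_Suc_shift) simp
  also have "\<dots> = (\<Sum>n\<le>N. \<Sum>y\<le>N. p y * Fp p (m + y) n)"
    by (intro sum.cong refl Fp_Suc_ext) auto
  also have "\<dots> = (\<Sum>y\<le>N. p y * Up p (m + y) N)"
    unfolding Up_def by (subst sum.swap) (simp add: sum_distrib_left)
  finally show ?thesis .
qed

lemma Up_le1:
  assumes p0: "\<And>y. 0 \<le> p y" and ps: "p sums 1"
  shows "Up p m N \<le> 1"
proof (induction N arbitrary: m)
  case 0 then show ?case by (simp add: Up_def)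
next
  case (Suc N)
  show ?case
  proof (cases m)
    case 0 then show ?thesis by (simp add: Up_0_left)
  next
    case (Suc m')
    have "Up p m (Suc N) = (\<Sum>y\<le>N. p y * Up p (m' + y) N)" by (simp add: Suc Up_Suc)
    also have "\<dots> \<le> (\<Sum>y\<le>N. p y)"
      by (intro sum_mono mult_left_le) (auto simp: p0 Suc.IH)
    also have "\<dots> \<le> suminf p"
      using ps p0 by (intro sum_le_suminf) (auto simp: sums_iff)
    finally show ?thesis using ps by (simp add: sums_iff)
  qed
qed

lemma Up_tail:
  assumes p0: "\<And>y. 0 \<le> p y" and ps: "p sums 1" and r1: "1 \<le> r"
    and pr: "(\<lambda>y. p y * r ^ y) sums (r * \<rho>)"
  shows "1 - Up p m N \<le> r ^ m * \<rho> ^ N"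
proof -
  have rho1: "1 \<le> r * \<rho>"
  proof -
    have "p y \<le> p y * r ^ y" for y
      using mult_left_mono[OF one_le_power[OF r1] p0[of y], of y] by simp
    from sums_le[OF this ps pr] show ?thesis .
  qed
  have rho0: "0 \<le> \<rho>" using rho1 r1
    using zero_le_mult_iff[of r \<rho>] by auto
  show ?thesis
  proof (induction N arbitrary: m)
    case 0 then show ?case using r1 by (simp add: Up_def)
  next
    case (Suc N)
    show ?case
    proof (cases m)
      case 0 then show ?thesis using rho0 r1 by (simp add: Up_0_left)
    next
      case (Suc m')
      define h where "h y = p y * (if y \<le> N then 1 - Up p (m' + y) N else 1)" for y
      have fin: "(\<lambda>y. p y * (if y \<le> N then Up p (m' + y) N else 0)) sums (\<Sum>y\<le>N. p y * Up p (m' + y) N)"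
      proof -
        have "(\<lambda>y. p y * (if y \<le> N then Up p (m' + y) N else 0)) sums
              (\<Sum>y\<in>{..N}. p y * (if y \<le> N then Up p (m' + y) N else 0))"
          by (intro sums_finite) auto
        then show ?thesis by simp
      qed
      have "(\<lambda>y. p y - p y * (if y \<le> N then Up p (m' + y) N else 0)) sums (1 - (\<Sum>y\<le>N. p y * Up p (m' + y) N))"
        by (intro sums_diff ps fin)
      also have "(\<lambda>y. p y - p y * (if y \<le> N then Up p (m' + y) N else 0)) = h"
        by (auto simp: h_def fun_eq_iff right_diff_distrib)
      finally have hs: "h sums (1 - Up p m (Suc N))" by (simp add: Suc Up_Suc)
      have bs: "(\<lambda>y. (r ^ m' * \<rho> ^ N) * (p y * r ^ y)) sums ((r ^ m' * \<rho> ^ N) * (r * \<rho>))"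
        by (intro sums_mult pr)
      have "h y \<le> (r ^ m' * \<rho> ^ N) * (p y * r ^ y)" for y
      proof (cases "y \<le> N")
        case True
        then have "h y = p y * (1 - Up p (m' + y) N)" by (simp add: h_def)
        also have "\<dots> \<le> p y * (r ^ (m' + y) * \<rho> ^ N)"
          by (intro mult_left_mono Suc.IH p0)
        finally show ?thesis by (simp add: power_add ac_simps)
      next
        case False
        then have "h y = p y" by (simp add: h_def)
        have "1 \<le> r ^ (m' + y - N) * (r * \<rho>) ^ N"
          using mult_mono[OF one_le_power[OF r1] one_le_power[OF rho1], of "m' + y - N" N] r1 by simp
        also have "r ^ (m' + y - N) * (r * \<rho>) ^ N = r ^ (m' + y) * \<rho> ^ N"
        proof -
          have e: "r ^ (m' + y) = r ^ (m' + y - N) * r ^ N"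
            using False by (simp add: power_add[symmetric])
          show ?thesis unfolding e power_mult_distrib by (simp only: mult.assoc)
        qed
        finally have "p y * 1 \<le> p y * (r ^ (m' + y) * \<rho> ^ N)" by (intro mult_left_mono p0)
        then show ?thesis using \<open>h y = p y\<close> by (simp add: power_add ac_simps)
      qed
      from sums_le[OF this hs bs] show ?thesis by (simp add: Suc ac_simps)
    qed
  qed
qed




lemma ennreal_suminf_swap:
  fixes f :: "nat \<Rightarrow> nat \<Rightarrow> ennreal"
  shows "(\<Sum>n. \<Sum>y. f y n) = (\<Sum>y. \<Sum>n. f y n)"
proof -
  have "(\<integral>\<^sup>+ n. (\<Sum>y. f y n) \<partial>count_space UNIV) = (\<Sum>y. integral\<^sup>N (count_space UNIV) (f y))"
    by (rule nn_integral_suminf) simp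
  then show ?thesis by (simp add: nn_integral_count_space_nat)
qed

lemma dsum:
  fixes a :: "nat \<Rightarrow> nat \<Rightarrow> real"
  assumes a0: "\<And>y n. 0 \<le> a y n" and az: "\<And>y n. n < y \<Longrightarrow> a y n = 0"
    and aS: "\<And>y. (\<lambda>n. a y n) sums S y" and Ss: "summable S"
  shows "(\<lambda>n. \<Sum>y\<le>n. a y n) sums (\<Sum>y. S y)"
proof -
  have fin: "(\<lambda>y. a y n) sums (\<Sum>y\<le>n. a y n)" for n
    using az by (intro sums_finite) auto
  have S0: "0 \<le> S y" for y using aS[of y] a0 by (metis sums_iff suminf_nonneg)
  have "(\<Sum>n. ennreal (\<Sum>y\<le>n. a y n)) = (\<Sum>n. \<Sum>y. ennreal (a y n))"
    by (intro suminf_cong) (rule suminf_ennreal_eq[OF a0 fin, symmetric])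
  also have "\<dots> = (\<Sum>y. \<Sum>n. ennreal (a y n))" by (rule ennreal_suminf_swap)
  also have "\<dots> = (\<Sum>y. ennreal (S y))"
    by (intro suminf_cong) (rule suminf_ennreal_eq[OF a0 aS])
  also have "\<dots> = ennreal (\<Sum>y. S y)" using S0 Ss by (simp add: suminf_ennreal2)
  finally have eq: "(\<Sum>n. ennreal (\<Sum>y\<le>n. a y n)) = ennreal (\<Sum>y. S y)" .
  have "(\<lambda>n. ennreal (\<Sum>y\<le>n. a y n)) sums (\<Sum>n. ennreal (\<Sum>y\<le>n. a y n))"
    by (rule summable_sums) (rule summableI)
  then have "(\<lambda>n. ennreal (\<Sum>y\<le>n. a y n)) sums ennreal (\<Sum>y. S y)" by (simp only: eq)
  then show ?thesis
    using a0 S0 Ss by (subst (asm) sums_ennreal) (auto intro!: sum_nonneg suminf_nonneg)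
qed




lemma summable_sq_geom:
  fixes x :: real assumes "0 \<le> x" "x < 1"
  shows "summable (\<lambda>n. (real n + 1)^2 * x ^ n)"
proof -
  define c :: "nat \<Rightarrow> real" where "c = (\<lambda>_. 1)"
  have s0: "summable (\<lambda>n. c n * z ^ n)" if "norm z < 1" for z :: real
    using summable_geometric[OF that] by (simp add: c_def)
  have s1: "summable (\<lambda>n. diffs c n * z ^ n)" if "norm z < 1" for z :: real
    by (rule termdiff_converges[OF that s0])
  have s2: "summable (\<lambda>n. diffs (diffs c) n * x ^ n)"
    by (rule termdiff_converges[of x 1, OF _ s1]) (use assms in auto)
  show ?thesis
  proof (rule summable_comparison_test[OF _ s2], intro exI allI impI)
    fix n :: nat
    have "(real n + 1)^2 * x ^ n \<le> ((real n + 1) * (real n + 2)) * x ^ n"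
      using assms by (intro mult_right_mono) (auto simp: power2_eq_square)
    then show "norm ((real n + 1)^2 * x ^ n) \<le> diffs (diffs c) n * x ^ n"
      using assms by (simp add: diffs_def c_def algebra_simps)
  qed
qed

locale gen =
  fixes p :: "nat \<Rightarrow> real" and r \<rho> lam :: real
  assumes p0: "\<And>y. 0 \<le> p y" and ps: "p sums 1" and r1: "1 \<le> r"
    and pr: "(\<lambda>y. p y * r ^ y) sums (r * \<rho>)" and rho_lt: "\<rho> < 1"
    and pm1: "(\<lambda>y. real y * p y) sums lam"
    and pm2: "(\<lambda>y. real y * (real y - 1) * p y) sums lam^2"
    and lam1: "lam < 1"
begin

lemma F0: "0 \<le> Fp p m n" by (rule Fp_nonneg[OF p0])

lemma rho0: "0 \<le> \<rho>"
proof -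
  have "p y \<le> p y * r ^ y" for y
    using mult_left_mono[OF one_le_power[OF r1] p0[of y], of y] by simp
  from sums_le[OF this ps pr] have "1 \<le> r * \<rho>" .
  then show ?thesis using r1 zero_le_mult_iff[of r \<rho>] by auto
qed

lemma tail: "1 - Up p m N \<le> r ^ m * \<rho> ^ N"
  by (rule Up_tail[OF p0 ps r1 pr])

lemma F_sums: "(\<lambda>n. Fp p m n) sums 1"
proof -
  have "(\<lambda>N. Up p m N) \<longlonglongrightarrow> 1"
  proof (rule real_tendsto_sandwich)
    show "\<forall>\<^sub>F N in sequentially. 1 - r ^ m * \<rho> ^ N \<le> Up p m N"
      using tail by (auto simp: algebra_simps)
    show "\<forall>\<^sub>F N in sequentially. Up p m N \<le> 1"
      using Up_le1[OF p0 ps] by auto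
    have "(\<lambda>N. 1 - r ^ m * \<rho> ^ N) \<longlonglongrightarrow> 1 - r ^ m * 0"
      using rho0 rho_lt by (intro tendsto_intros) auto
    then show "(\<lambda>N. 1 - r ^ m * \<rho> ^ N) \<longlonglongrightarrow> 1" by simp
  qed simp
  then show ?thesis unfolding sums_def_le Up_def .
qed

lemma decay: "Fp p m (Suc N) \<le> r ^ m * \<rho> ^ N"
proof -
  have "Up p m (Suc N) = Up p m N + Fp p m (Suc N)" by (simp add: Up_def)
  with Up_le1[OF p0 ps, of m "Suc N"] tail[of m N] show ?thesis by linarith
qed

lemma summable_sq: "summable (\<lambda>n. real n ^ 2 * Fp p m n)"
proof -
  have "summable (\<lambda>n. r ^ m * ((real n + 1)^2 * \<rho> ^ n))"
    by (intro summable_mult summable_sq_geom rho0 rho_lt)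
  then have "summable (\<lambda>n. real (Suc n) ^ 2 * Fp p m (Suc n))"
  proof (rule summable_comparison_test[rotated], intro exI allI impI)
    fix n :: nat
    have "real (Suc n) ^ 2 * Fp p m (Suc n) \<le> real (Suc n) ^ 2 * (r ^ m * \<rho> ^ n)"
      by (intro mult_left_mono decay) auto
    then show "norm (real (Suc n) ^ 2 * Fp p m (Suc n)) \<le> r ^ m * ((real n + 1)^2 * \<rho> ^ n)"
      using F0 by (simp add: ac_simps)
  qed
  then show ?thesis by (subst (asm) summable_Suc_iff)
qed

lemma summable_1: "summable (\<lambda>n. real n * Fp p m n)"
proof (rule summable_comparison_test[OF _ summable_sq[of m]], intro exI allI impI)
  fix n :: nat
  have "real n \<le> real n ^ 2" by (cases n) (auto simp: power2_eq_square)
  then show "norm (real n * Fp p m n) \<le> real n ^ 2 * Fp p m n"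
    using F0 by (simp add: mult_right_mono)
qed

definition "mu = (\<Sum>n. real n * Fp p 1 n)"
definition "nu = (\<Sum>n. real n ^ 2 * Fp p 1 n)"

lemma conv_sums:
  fixes f g :: "nat \<Rightarrow> real"
  assumes "summable (\<lambda>n. norm (f n))" "summable (\<lambda>n. norm (g n))"
  shows "(\<lambda>n. \<Sum>i\<le>n. f i * g (n - i)) sums (suminf f * suminf g)"
  by (rule Cauchy_product_sums[OF assms])

lemma mom1_add: "(\<lambda>n. real n * Fp p (a + b) n) sums
   ((\<Sum>n. real n * Fp p a n) + (\<Sum>n. real n * Fp p b n))"
proof -
  have sa: "summable (\<lambda>n. norm (real n * Fp p a n))" and sb: "summable (\<lambda>n. norm (real n * Fp p b n))"
    and fa: "summable (\<lambda>n. norm (Fp p a n))" and fb: "summable (\<lambda>n. norm (Fp p b n))"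
    using summable_1 F_sums F0 by (auto simp: sums_iff)
  have "(\<lambda>n. (\<Sum>i\<le>n. (real i * Fp p a i) * Fp p b (n - i)) + (\<Sum>i\<le>n. Fp p a i * (real (n - i) * Fp p b (n - i))))
     sums ((\<Sum>n. real n * Fp p a n) * (\<Sum>n. Fp p b n) + (\<Sum>n. Fp p a n) * (\<Sum>n. real n * Fp p b n))"
    by (intro sums_add conv_sums sa sb fa fb)
  also have "(\<lambda>n. (\<Sum>i\<le>n. (real i * Fp p a i) * Fp p b (n - i)) + (\<Sum>i\<le>n. Fp p a i * (real (n - i) * Fp p b (n - i))))
      = (\<lambda>n. real n * Fp p (a + b) n)"
  proof
    fix n
    have "(\<Sum>i\<le>n. (real i * Fp p a i) * Fp p b (n - i)) + (\<Sum>i\<le>n. Fp p a i * (real (n - i) * Fp p b (n - i)))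
        = (\<Sum>i\<le>n. real n * (Fp p a i * Fp p b (n - i)))"
      by (subst sum.distrib[symmetric], intro sum.cong refl) (auto simp: of_nat_diff algebra_simps)
    also have "\<dots> = real n * Fp p (a + b) n" by (simp add: Fp_conv sum_distrib_left)
    finally show "(\<Sum>i\<le>n. (real i * Fp p a i) * Fp p b (n - i)) + (\<Sum>i\<le>n. Fp p a i * (real (n - i) * Fp p b (n - i)))
        = real n * Fp p (a + b) n" .
  qed
  finally show ?thesis using F_sums by (simp add: sums_iff)
qed

lemma mom2_add: "(\<lambda>n. real n ^ 2 * Fp p (a + b) n) sums
   ((\<Sum>n. real n ^ 2 * Fp p a n) + 2 * (\<Sum>n. real n * Fp p a n) * (\<Sum>n. real n * Fp p b n) + (\<Sum>n. real n ^ 2 * Fp p b n))"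
proof -
  have sa: "summable (\<lambda>n. norm (real n * Fp p a n))" and sb: "summable (\<lambda>n. norm (real n * Fp p b n))"
    and fa: "summable (\<lambda>n. norm (Fp p a n))" and fb: "summable (\<lambda>n. norm (Fp p b n))"
    and qa: "summable (\<lambda>n. norm (real n ^ 2 * Fp p a n))" and qb: "summable (\<lambda>n. norm (real n ^ 2 * Fp p b n))"
    using summable_1 summable_sq F_sums F0 by (auto simp: sums_iff)
  have "(\<lambda>n. (\<Sum>i\<le>n. (real i ^ 2 * Fp p a i) * Fp p b (n - i)) + 2 * (\<Sum>i\<le>n. (real i * Fp p a i) * (real (n - i) * Fp p b (n - i)))
          + (\<Sum>i\<le>n. Fp p a i * (real (n - i) ^ 2 * Fp p b (n - i))))
     sums ((\<Sum>n. real n ^ 2 * Fp p a n) * (\<Sum>n. Fp p b n) + 2 * ((\<Sum>n. real n * Fp p a n) * (\<Sum>n. real n * Fp p b n))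
           + (\<Sum>n. Fp p a n) * (\<Sum>n. real n ^ 2 * Fp p b n))"
    by (intro sums_add sums_mult conv_sums sa sb fa fb qa qb)
  also have "(\<lambda>n. (\<Sum>i\<le>n. (real i ^ 2 * Fp p a i) * Fp p b (n - i)) + 2 * (\<Sum>i\<le>n. (real i * Fp p a i) * (real (n - i) * Fp p b (n - i)))
          + (\<Sum>i\<le>n. Fp p a i * (real (n - i) ^ 2 * Fp p b (n - i))))
      = (\<lambda>n. real n ^ 2 * Fp p (a + b) n)"
  proof
    fix n
    have "(\<Sum>i\<le>n. (real i ^ 2 * Fp p a i) * Fp p b (n - i)) + 2 * (\<Sum>i\<le>n. (real i * Fp p a i) * (real (n - i) * Fp p b (n - i)))
          + (\<Sum>i\<le>n. Fp p a i * (real (n - i) ^ 2 * Fp p b (n - i)))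
        = (\<Sum>i\<le>n. real n ^ 2 * (Fp p a i * Fp p b (n - i)))"
      by (simp only: sum.distrib[symmetric] sum_distrib_left, intro sum.cong refl)
         (auto simp: of_nat_diff power2_eq_square algebra_simps)
    also have "\<dots> = real n ^ 2 * Fp p (a + b) n" by (simp add: Fp_conv sum_distrib_left)
    finally show "(\<Sum>i\<le>n. (real i ^ 2 * Fp p a i) * Fp p b (n - i)) + 2 * (\<Sum>i\<le>n. (real i * Fp p a i) * (real (n - i) * Fp p b (n - i)))
          + (\<Sum>i\<le>n. Fp p a i * (real (n - i) ^ 2 * Fp p b (n - i))) = real n ^ 2 * Fp p (a + b) n" .
  qed
  finally show ?thesis using F_sums by (simp add: sums_iff)
qed

lemma mom1: "(\<lambda>n. real n * Fp p m n) sums (real m * mu)"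
proof (induction m)
  case 0
  have "(\<lambda>n. real n * Fp p 0 n) = (\<lambda>n. 0)" by (auto simp: Fp_0_left)
  then show ?case by simp
next
  case (Suc m)
  have "(\<lambda>n. real n * Fp p (m + 1) n) sums ((\<Sum>n. real n * Fp p m n) + (\<Sum>n. real n * Fp p 1 n))"
    by (rule mom1_add)
  then show ?case using Suc by (simp add: sums_iff mu_def algebra_simps)
qed

lemma mom2: "(\<lambda>n. real n ^ 2 * Fp p m n) sums (real m * nu + real m * (real m - 1) * mu ^ 2)"
proof (induction m)
  case 0
  have "(\<lambda>n. real n ^ 2 * Fp p 0 n) = (\<lambda>n. 0)" by (auto simp: Fp_0_left)
  then show ?case by simp
next
  case (Suc m)
  have "(\<lambda>n. real n ^ 2 * Fp p (m + 1) n) sums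
     ((\<Sum>n. real n ^ 2 * Fp p m n) + 2 * (\<Sum>n. real n * Fp p m n) * (\<Sum>n. real n * Fp p 1 n) + (\<Sum>n. real n ^ 2 * Fp p 1 n))"
    by (rule mom2_add)
  then show ?case using Suc mom1[of m] by (simp add: sums_iff mu_def nu_def power2_eq_square algebra_simps)
qed

end



context gen begin

lemma first_step:
  fixes q :: "nat \<Rightarrow> real"
  assumes q0: "\<And>y. 0 \<le> q y" and qs: "q sums Q0" and q1: "(\<lambda>y. real y * q y) sums Q1"
    and q2: "(\<lambda>y. real y * (real y - 1) * q y) sums Q2"
  shows "(\<lambda>n. \<Sum>y\<le>n. q y * Fp p y n) sums Q0"
    and "(\<lambda>n. (real n + 1) * (\<Sum>y\<le>n. q y * Fp p y n)) sums (Q0 + mu * Q1)"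
    and "(\<lambda>n. (real n + 1)^2 * (\<Sum>y\<le>n. q y * Fp p y n)) sums (Q0 + (2 * mu + nu) * Q1 + mu^2 * Q2)"
proof -
  have a0: "\<And>y n. 0 \<le> q y * (w n * Fp p y n)" if w0: "\<And>n. 0 \<le> w n" for w :: "nat \<Rightarrow> real"
    using q0 F0 w0 by (intro mult_nonneg_nonneg) auto
  have az: "\<And>y n. n < y \<Longrightarrow> q y * (w n * Fp p y n) = 0" for w :: "nat \<Rightarrow> real"
    by (simp add: Fp_zero)
  have "(\<lambda>n. \<Sum>y\<le>n. q y * ((\<lambda>_. 1) n * Fp p y n)) sums (\<Sum>y. q y * 1)"
  proof (rule dsum[OF a0 az])
    show "(\<lambda>n. q y * ((\<lambda>_. 1) n * Fp p y n)) sums (q y * 1)" for y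
      using sums_mult[OF F_sums[of y], of "q y"] by simp
    show "summable (\<lambda>y. q y * 1)" using qs by (simp add: sums_iff)
  qed simp
  then show "(\<lambda>n. \<Sum>y\<le>n. q y * Fp p y n) sums Q0" using qs by (simp add: sums_iff)
  have in1: "(\<lambda>n. (real n + 1) * Fp p y n) sums (real y * mu + 1)" for y
    using sums_add[OF mom1[of y] F_sums[of y]] by (simp add: algebra_simps)
  have S1: "(\<lambda>y. q y * (real y * mu + 1)) sums (mu * Q1 + Q0)"
  proof -
    have "(\<lambda>y. mu * (real y * q y) + q y) sums (mu * Q1 + Q0)"
      by (intro sums_add sums_mult q1 qs)
    then show ?thesis by (simp add: algebra_simps)
  qed
  have "(\<lambda>n. \<Sum>y\<le>n. q y * ((\<lambda>n. real n + 1) n * Fp p y n)) sums (\<Sum>y. q y * (real y * mu + 1))"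
  proof (rule dsum[OF a0 az])
    show "(\<lambda>n. q y * ((\<lambda>n. real n + 1) n * Fp p y n)) sums (q y * (real y * mu + 1))" for y
      using sums_mult[OF in1[of y], of "q y"] by simp
    show "summable (\<lambda>y. q y * (real y * mu + 1))" using S1 by (simp add: sums_iff)
  qed simp
  then show "(\<lambda>n. (real n + 1) * (\<Sum>y\<le>n. q y * Fp p y n)) sums (Q0 + mu * Q1)"
    using S1 by (simp add: sums_iff sum_distrib_left algebra_simps)
  have in2: "(\<lambda>n. (real n + 1)^2 * Fp p y n) sums
       ((real y * nu + real y * (real y - 1) * mu ^ 2) + 2 * (real y * mu) + 1)" for y
  proof -
    have "(\<lambda>n. real n ^ 2 * Fp p y n + 2 * (real n * Fp p y n) + Fp p y n) sums
       ((real y * nu + real y * (real y - 1) * mu ^ 2) + 2 * (real y * mu) + 1)"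
      by (intro sums_add sums_mult mom1 mom2 F_sums)
    then show ?thesis by (simp add: power2_eq_square algebra_simps)
  qed
  have S2: "(\<lambda>y. q y * ((real y * nu + real y * (real y - 1) * mu ^ 2) + 2 * (real y * mu) + 1))
      sums (nu * Q1 + mu^2 * Q2 + 2 * mu * Q1 + Q0)"
  proof -
    have "(\<lambda>y. nu * (real y * q y) + mu^2 * (real y * (real y - 1) * q y) + (2 * mu) * (real y * q y) + q y)
        sums (nu * Q1 + mu^2 * Q2 + 2 * mu * Q1 + Q0)"
      by (intro sums_add sums_mult q1 q2 qs)
    then show ?thesis by (simp add: algebra_simps)
  qed
  have "(\<lambda>n. \<Sum>y\<le>n. q y * ((\<lambda>n. (real n + 1)^2) n * Fp p y n)) sums
      (\<Sum>y. q y * ((real y * nu + real y * (real y - 1) * mu ^ 2) + 2 * (real y * mu) + 1))"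
  proof (rule dsum[OF a0 az])
    show "(\<lambda>n. q y * ((\<lambda>n. (real n + 1)^2) n * Fp p y n)) sums
       (q y * ((real y * nu + real y * (real y - 1) * mu ^ 2) + 2 * (real y * mu) + 1))" for y
      using sums_mult[OF in2[of y], of "q y"] by simp
    show "summable (\<lambda>y. q y * ((real y * nu + real y * (real y - 1) * mu ^ 2) + 2 * (real y * mu) + 1))"
      using S2 by (simp add: sums_iff)
  qed simp
  then show "(\<lambda>n. (real n + 1)^2 * (\<Sum>y\<le>n. q y * Fp p y n)) sums (Q0 + (2 * mu + nu) * Q1 + mu^2 * Q2)"
    using S2 by (simp add: sums_iff sum_distrib_left algebra_simps)
qed

lemma F1_Suc: "Fp p 1 (Suc n) = (\<Sum>y\<le>n. p y * Fp p y n)"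
  by simp

lemma mu_val: "mu = 1 / (1 - lam)"
proof -
  have "(\<lambda>n. (real n + 1) * Fp p 1 (Suc n)) sums (1 + mu * lam)"
    using first_step(2)[OF p0 ps pm1 pm2] by (simp only: F1_Suc)
  moreover have "(\<lambda>n. real (Suc n) * Fp p 1 (Suc n)) sums mu"
    using mom1[of 1] by (subst sums_Suc_iff) simp
  ultimately have "mu = 1 + mu * lam" by (simp add: sums_iff add.commute)
  then show ?thesis using lam1 by (simp add: field_simps)
qed

lemma nu_val: "nu = 1 / (1 - lam) ^ 3"
proof -
  have "(\<lambda>n. (real n + 1)^2 * Fp p 1 (Suc n)) sums (1 + (2 * mu + nu) * lam + mu^2 * lam^2)"
    using first_step(3)[OF p0 ps pm1 pm2] by (simp only: F1_Suc)
  moreover have "(\<lambda>n. real (Suc n)^2 * Fp p 1 (Suc n)) sums nu"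
    using mom2[of 1] by (subst sums_Suc_iff) simp
  ultimately have e: "nu = 1 + (2 * mu + nu) * lam + mu^2 * lam^2" by (simp add: sums_iff add.commute)
  have d: "1 - lam \<noteq> 0" using lam1 by simp
  have "nu * (1 - lam) = (1 + mu * lam)^2" using e by (simp add: power2_eq_square algebra_simps)
  also have "1 + mu * lam = 1 / (1 - lam)" using d by (simp add: mu_val field_simps)
  finally have "nu * (1 - lam) = (1 / (1 - lam))^2" .
  then have "nu = (1 / (1 - lam))^2 / (1 - lam)" using d by (simp add: eq_divide_eq)
  then show ?thesis by (simp add: power2_eq_square power3_eq_cube)
qed

end



lemma bin1: "(\<Sum>k\<le>K. (K choose k) * a ^ (K - k)) = (a + 1 :: nat) ^ K"
  using binomial_ring[of 1 a K] by (simp add: add.commute)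

lemma bin2: "(\<Sum>k\<le>K. (K choose k) * k * a ^ (K - k)) = K * (a + 1 :: nat) ^ (K - 1)"
proof (cases K)
  case 0 then show ?thesis by simp
next
  case (Suc K')
  have "(\<Sum>k\<le>Suc K'. (Suc K' choose k) * k * a ^ (Suc K' - k)) =
        (\<Sum>k\<le>K'. (Suc K' choose Suc k) * Suc k * a ^ (K' - k))"
    by (subst sum.atMost_Suc_shift) simp
  also have "\<dots> = (\<Sum>k\<le>K'. Suc K' * ((K' choose k) * a ^ (K' - k)))"
    by (intro sum.cong refl) (subst Suc_times_binomial_eq[symmetric], simp only: mult.assoc)
  also have "\<dots> = Suc K' * (a + 1) ^ K'" by (simp only: sum_distrib_left[symmetric] bin1)
  finally show ?thesis by (simp add: Suc)
qed

lemma bin_I1: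
  assumes "m + K = n"
  shows "(n + 1) * (\<Sum>y\<le>K. (K choose y) * (m + y) * n ^ (K - y)) = n * (m + 1) * (n + 1 :: nat) ^ K"
proof -
  have "(\<Sum>y\<le>K. (K choose y) * (m + y) * n ^ (K - y)) =
        m * (\<Sum>y\<le>K. (K choose y) * n ^ (K - y)) + (\<Sum>y\<le>K. (K choose y) * y * n ^ (K - y))"
    by (simp add: sum_distrib_left sum.distrib[symmetric] algebra_simps)
  also have "\<dots> = m * (n + 1) ^ K + K * (n + 1) ^ (K - 1)" by (simp add: bin1 bin2)
  finally have e: "(\<Sum>y\<le>K. (K choose y) * (m + y) * n ^ (K - y)) = m * (n + 1) ^ K + K * (n + 1) ^ (K - 1)" .
  show ?thesis
  proof (cases K)
    case 0 then show ?thesis using assms e by simp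
  next
    case (Suc K')
    have "(n + 1) * (m * (n + 1) ^ K + K * (n + 1) ^ (K - 1)) = (n + 1) ^ K * (m * (n + 1) + K)"
      by (simp add: Suc algebra_simps)
    also have "m * (n + 1) + K = n * (m + 1)" using assms by (simp add: algebra_simps)
    finally show ?thesis using e by (simp add: algebra_simps)
  qed
qed

lemma bin_I2: "(\<Sum>y\<le>n. (Suc n choose Suc y) * y * n ^ (n - y)) = n ^ Suc n"
proof -
  define g :: "nat \<Rightarrow> int" where "g j = int (Suc n choose j) * (int j - 1) * int n ^ (Suc n - j)" for j
  have "(\<Sum>j\<le>Suc n. g j) = (\<Sum>j\<le>Suc n. int ((Suc n choose j) * j * n ^ (Suc n - j)))
          - (\<Sum>j\<le>Suc n. int ((Suc n choose j) * n ^ (Suc n - j)))"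
    unfolding sum_subtractf[symmetric] by (intro sum.cong refl) (simp add: g_def algebra_simps)
  also have "\<dots> = int (Suc n * (n + 1) ^ n) - int ((n + 1) ^ Suc n)"
    by (simp only: of_nat_sum[symmetric] bin1 bin2) simp
  also have "\<dots> = 0" by simp
  finally have "(\<Sum>j\<le>Suc n. g j) = 0" .
  then have "g 0 + (\<Sum>y\<le>n. g (Suc y)) = 0" by (simp only: sum.atMost_Suc_shift)
  then have "(\<Sum>y\<le>n. g (Suc y)) = int n ^ Suc n" by (simp add: g_def)
  then have "int (\<Sum>y\<le>n. (Suc n choose Suc y) * y * n ^ (n - y)) = int (n ^ Suc n)"
    by (simp add: g_def)
  then show ?thesis by (simp only: of_nat_eq_iff)
qed

lemma aux_div: "(n::real) \<noteq> 0 \<Longrightarrow> X / (n * f) * (n * c / d) = X * c / (d * f)"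
  by (cases "f = 0"; cases "d = 0") (simp_all add: field_simps)

definition pois :: "real \<Rightarrow> nat \<Rightarrow> real" where
  "pois lam y = lam ^ y / fact y * exp (- lam)"

definition CF :: "real \<Rightarrow> nat \<Rightarrow> nat \<Rightarrow> real" where
  "CF lam m n = (if m \<le> n then real m * real n ^ (n - m) * lam ^ (n - m) * exp (- real n * lam)
       / (real n * fact (n - m)) else 0)"

lemma CF_step:
  assumes "1 \<le> n" "m \<le> n"
  shows "(\<Sum>y\<le>n. pois lam y * CF lam (m + y) n) = CF lam (Suc m) (Suc n)"
proof -
  define K where "K = n - m"
  have Kn: "m + K = n" using assms by (simp add: K_def)
  have "(\<Sum>y\<le>n. pois lam y * CF lam (m + y) n) = (\<Sum>y\<le>K. pois lam y * CF lam (m + y) n)"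
    using Kn by (intro sum.mono_neutral_right) (auto simp: CF_def)
  also have "\<dots> = (\<Sum>y\<le>K. lam ^ K * exp (- (real n + 1) * lam) / (real n * fact K)
        * real ((K choose y) * (m + y) * n ^ (K - y)))"
  proof (intro sum.cong refl)
    fix y assume "y \<in> {..K}"
    then have y: "y \<le> K" by simp
    have fk: "fact K = (fact y * fact (K - y) * real (K choose y) :: real)"
      using binomial_fact_lemma[OF y] by (metis of_nat_fact of_nat_mult)
    have pw: "lam ^ K = lam ^ y * lam ^ (K - y)" using y by (simp add: power_add[symmetric])
    have ex: "exp (- (real n + 1) * lam) = exp (- lam) * exp (- real n * lam)"
      by (simp add: exp_add[symmetric] algebra_simps)
    have nmy: "n - (m + y) = K - y" using Kn by simp
    have "(K choose y) > 0" using y by simp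
    then show "pois lam y * CF lam (m + y) n = lam ^ K * exp (- (real n + 1) * lam) / (real n * fact K)
        * real ((K choose y) * (m + y) * n ^ (K - y))"
      using y Kn assms unfolding pois_def CF_def fk pw ex nmy
      by (simp add: field_simps)
  qed
  also have "\<dots> = lam ^ K * exp (- (real n + 1) * lam) / (real n * fact K)
        * real (\<Sum>y\<le>K. (K choose y) * (m + y) * n ^ (K - y))"
    by (simp add: sum_distrib_left)
  also have "real (\<Sum>y\<le>K. (K choose y) * (m + y) * n ^ (K - y)) = real n * (real m + 1) * (real n + 1) ^ K / (real n + 1)"
  proof -
    have "real ((n + 1) * (\<Sum>y\<le>K. (K choose y) * (m + y) * n ^ (K - y))) = real (n * (m + 1) * (n + 1) ^ K)"
      using bin_I1[OF Kn] by simp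
    then show ?thesis by (simp add: field_simps)
  qed
  also have "lam ^ K * exp (- (real n + 1) * lam) / (real n * fact K) * (real n * (real m + 1) * (real n + 1) ^ K / (real n + 1))
      = lam ^ K * exp (- (real n + 1) * lam) * ((real m + 1) * (real n + 1) ^ K) / ((real n + 1) * fact K)"
  proof -
    have n0: "real n \<noteq> 0" using assms by simp
    show ?thesis using aux_div[OF n0, of "lam ^ K * exp (- (real n + 1) * lam)" "fact K" "(real m + 1) * (real n + 1) ^ K" "real n + 1"]
      by (simp only: mult.assoc)
  qed
  also have "\<dots> = CF lam (Suc m) (Suc n)"
  proof -
    have "Suc n - Suc m = K" by (simp add: K_def)
    then have "CF lam (Suc m) (Suc n) = (real (Suc m) * real (Suc n) ^ K * lam ^ K * exp (- real (Suc n) * lam))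
       / (real (Suc n) * fact K)" using assms by (simp add: CF_def)
    also have "\<dots> = lam ^ K * exp (- (real n + 1) * lam) * ((real m + 1) * (real n + 1) ^ K) / ((real n + 1) * fact K)"
      by (intro arg_cong2[where f="(/)"]) (simp_all add: algebra_simps)
    finally show ?thesis ..
  qed
  finally show ?thesis .
qed

lemma Fp_pois: "1 \<le> n \<Longrightarrow> Fp (pois lam) m n = CF lam m n"
proof (induction n arbitrary: m rule: nat_induct_at_least)
  case base
  show ?case
  proof (cases m)
    case 0 then show ?thesis by (simp add: CF_def)
  next
    case (Suc m')
    then show ?thesis by (cases m') (auto simp: CF_def pois_def)
  qed
next
  case (Suc n)
  show ?case
  proof (cases m)
    case 0 then show ?thesis by (simp add: CF_def)
  next
    case (Suc m')
    show ?thesis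
    proof (cases "m' \<le> n")
      case True
      have "Fp (pois lam) m (Suc n) = (\<Sum>y\<le>n. pois lam y * CF lam (m' + y) n)"
        using Suc.IH by (simp add: \<open>m = Suc m'\<close>)
      also have "\<dots> = CF lam m (Suc n)" using CF_step[OF Suc.hyps True] by (simp add: \<open>m = Suc m'\<close>)
      finally show ?thesis .
    next
      case False
      then show ?thesis by (simp add: Fp_zero CF_def \<open>m = Suc m'\<close>)
    qed
  qed
qed




lemma aux_div2: "(n::real) \<noteq> 0 \<Longrightarrow> X / (n * f) * (n * c) = X * c / f"
  by (cases "f = 0") (simp_all add: field_simps)

lemma aux3:
  fixes A B C n :: real
  assumes "A \<noteq> 0" "B \<noteq> 0" "C \<noteq> 0" "n \<noteq> 0"
  shows "(L1 / A * E1) * (y * N * L2 * E2 / (n * B)) = (L1 * L2) * (E1 * E2) / (n * (A * B * C)) * (C * y * N)"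
  using assms by (simp add: field_simps)

definition Hh :: "real \<Rightarrow> nat \<Rightarrow> real" where
  "Hh lam n = (\<Sum>y\<le>n. pois lam (Suc y) * Fp (pois lam) y n)"

lemma Hh_0: "Hh lam 0 = lam * exp (- lam)"
  by (simp add: Hh_def pois_def)

lemma Hh_pos:
  assumes n: "1 \<le> n"
  shows "Hh lam n = lam ^ Suc n * exp (- real (Suc n) * lam) * real n ^ n / fact (Suc n)"
proof -
  have n0: "real n \<noteq> 0" using n by simp
  have "Hh lam n = (\<Sum>y\<le>n. pois lam (Suc y) * CF lam y n)"
    unfolding Hh_def using Fp_pois[OF n] by simp
  also have "\<dots> = (\<Sum>y\<le>n. lam ^ Suc n * exp (- real (Suc n) * lam) / (real n * fact (Suc n))
        * real ((Suc n choose Suc y) * y * n ^ (n - y)))"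
  proof (intro sum.cong refl)
    fix y assume "y \<in> {..n}"
    then have y: "y \<le> n" by simp
    have fk: "fact (Suc n) = (fact (Suc y) * fact (n - y) * real (Suc n choose Suc y) :: real)"
      using binomial_fact_lemma[of "Suc y" "Suc n"] y by (metis Suc_le_mono diff_Suc_Suc of_nat_fact of_nat_mult)
    have pw: "lam ^ Suc n = lam ^ Suc y * lam ^ (n - y)" using y by (simp add: power_add[symmetric])
    have ex: "exp (- real (Suc n) * lam) = exp (- lam) * exp (- real n * lam)"
      by (simp add: exp_add[symmetric] algebra_simps)
    have C0: "real (Suc n choose Suc y) \<noteq> 0" using y by (simp del: binomial_Suc_Suc)
    have "pois lam (Suc y) * CF lam y n = (lam ^ Suc y / fact (Suc y) * exp (- lam)) *
       (real y * real n ^ (n - y) * lam ^ (n - y) * exp (- real n * lam) / (real n * fact (n - y)))"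
      by (simp only: pois_def CF_def if_P[OF y])
    also have "\<dots> = (lam ^ Suc y * lam ^ (n - y)) * (exp (- lam) * exp (- real n * lam))
        / (real n * (fact (Suc y) * fact (n - y) * real (Suc n choose Suc y)))
        * (real (Suc n choose Suc y) * real y * real n ^ (n - y))"
      by (rule aux3) (use n0 C0 in auto)
    also have "\<dots> = lam ^ Suc n * exp (- real (Suc n) * lam) / (real n * fact (Suc n))
        * real ((Suc n choose Suc y) * y * n ^ (n - y))"
      unfolding fk[symmetric] pw[symmetric] ex[symmetric] by simp
    finally show "pois lam (Suc y) * CF lam y n = lam ^ Suc n * exp (- real (Suc n) * lam) / (real n * fact (Suc n))
        * real ((Suc n choose Suc y) * y * n ^ (n - y))" .
  qed
  also have "\<dots> = lam ^ Suc n * exp (- real (Suc n) * lam) / (real n * fact (Suc n))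
        * real (\<Sum>y\<le>n. (Suc n choose Suc y) * y * n ^ (n - y))"
    by (simp add: sum_distrib_left)
  also have "\<dots> = lam ^ Suc n * exp (- real (Suc n) * lam) * real n ^ n / fact (Suc n)"
  proof -
    have "real (n ^ Suc n) = real n * real n ^ n" by simp
    then show ?thesis unfolding bin_I2 using aux_div2[OF n0] by (simp only: mult.assoc)
  qed
  finally show ?thesis .
qed

lemma pi_formula:
  assumes "1 \<le> n"
  shows "real n ^ n / fact (Suc n) = real (Suc n - 1) ^ (Suc n - 2) / (real (Suc n) * fact (Suc n - 2))"
proof -
  obtain k where k: "n = Suc k" using assms by (cases n) auto
  have a: "fact (Suc (Suc k)) = (real (Suc (Suc k)) * (real (Suc k) * fact k) :: real)"
    by (simp only: fact_Suc of_nat_mult)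
  have b: "real (Suc k) ^ Suc k = real (Suc k) * real (Suc k) ^ k" by simp
  have "real (Suc k) ^ Suc k / fact (Suc (Suc k)) = real (Suc k) ^ k / (real (Suc (Suc k)) * fact k)"
    unfolding a b by (simp del: of_nat_Suc)
  then show ?thesis by (simp add: k del: of_nat_Suc)
qed

lemma exp_sums: "(\<lambda>n. x ^ n / fact n) sums exp (x::real)"
  using exp_converges[of x] by (simp add: divide_inverse ac_simps)

lemma pois_sums: "pois lam sums 1"
proof -
  have "(\<lambda>y. lam ^ y / fact y * exp (- lam)) sums (exp lam * exp (- lam))"
    by (intro sums_mult2 exp_sums)
  moreover have "exp lam * exp (- lam) = 1" by (simp add: exp_minus)
  ultimately show ?thesis unfolding pois_def[abs_def] by simp
qed

lemma pois_r: "(\<lambda>y. pois lam y * r ^ y) sums exp (lam * (r - 1))"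
proof -
  have "(\<lambda>y. (lam * r) ^ y / fact y * exp (- lam)) sums (exp (lam * r) * exp (- lam))"
    by (intro sums_mult2 exp_sums)
  then show ?thesis
    by (simp add: pois_def exp_add[symmetric] power_mult_distrib algebra_simps)
qed

lemma pois_Suc: "pois lam (Suc y) = lam / real (Suc y) * pois lam y"
  by (simp add: pois_def field_simps)

lemma pois_m1: "(\<lambda>y. real y * pois lam y) sums lam"
proof -
  have "(\<lambda>y. lam * pois lam y) sums (lam * 1)" by (intro sums_mult pois_sums)
  moreover have "(\<lambda>y. real (Suc y) * pois lam (Suc y)) = (\<lambda>y. lam * pois lam y)"
    by (auto simp: pois_Suc fun_eq_iff simp del: of_nat_Suc)
  ultimately have "(\<lambda>y. real (Suc y) * pois lam (Suc y)) sums lam" by simp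
  then show ?thesis by (subst (asm) sums_Suc_iff) simp
qed

lemma pois_m2: "(\<lambda>y. real y * (real y - 1) * pois lam y) sums lam ^ 2"
proof -
  have "(\<lambda>y. lam * (real y * pois lam y)) sums (lam * lam)" by (intro sums_mult pois_m1)
  moreover have "(\<lambda>y. real (Suc y) * (real (Suc y) - 1) * pois lam (Suc y)) = (\<lambda>y. lam * (real y * pois lam y))"
    by (auto simp: pois_Suc fun_eq_iff simp del: of_nat_Suc)
  ultimately have "(\<lambda>y. real (Suc y) * (real (Suc y) - 1) * pois lam (Suc y)) sums lam^2"
    by (simp add: power2_eq_square)
  then show ?thesis by (subst (asm) sums_Suc_iff) simp
qed

lemma pois_nonneg: "0 \<le> lam \<Longrightarrow> 0 \<le> pois lam y"
  by (simp add: pois_def)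

lemma pois0: "pois lam 0 = exp (- lam)" by (simp add: pois_def)

lemma spois_sums: "(\<lambda>y. pois lam (Suc y)) sums (1 - exp (- lam))"
  using pois_sums[of lam] by (subst sums_Suc_iff) (simp add: pois0)

lemma spois_m1: "(\<lambda>y. real y * pois lam (Suc y)) sums (lam - (1 - exp (- lam)))"
proof -
  have a: "(\<lambda>y. real (Suc y) * pois lam (Suc y)) sums lam"
    using pois_m1[of lam] by (subst sums_Suc_iff) simp
  have "(\<lambda>y. real (Suc y) * pois lam (Suc y) - pois lam (Suc y)) sums (lam - (1 - exp (- lam)))"
    by (intro sums_diff a spois_sums)
  then show ?thesis by (simp add: algebra_simps)
qed

lemma spois_m2: "(\<lambda>y. real y * (real y - 1) * pois lam (Suc y)) sums (lam ^ 2 - 2 * (lam - (1 - exp (- lam))))"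
proof -
  have a: "(\<lambda>y. real (Suc y) * (real (Suc y) - 1) * pois lam (Suc y)) sums lam ^ 2"
    using pois_m2[of lam] by (subst sums_Suc_iff) simp
  have "(\<lambda>y. real (Suc y) * (real (Suc y) - 1) * pois lam (Suc y) - 2 * (real y * pois lam (Suc y)))
      sums (lam ^ 2 - 2 * (lam - (1 - exp (- lam))))"
    by (intro sums_diff sums_mult a spois_m1)
  then show ?thesis by (simp add: algebra_simps)
qed

lemma gen_pois:
  assumes "0 \<le> lam" "lam < 1"
  shows "\<exists>r \<rho>. gen (pois lam) r \<rho> lam"
proof (cases "lam = 0")
  case True
  have "gen (pois lam) 2 (1/2) lam"
  proof
    show "(\<lambda>y. pois lam y * 2 ^ y) sums (2 * (1 / 2))" using pois_r[of lam 2] True by simp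
  qed (use assms pois_nonneg pois_sums pois_m1 pois_m2 in auto)
  then show ?thesis by blast
next
  case False
  then have lp: "0 < lam" using assms by simp
  have "gen (pois lam) (1 / lam) (lam * exp (1 - lam)) lam"
  proof
    show "1 \<le> 1 / lam" using lp assms by simp
    have "exp (lam * (1 / lam - 1)) = 1 / lam * (lam * exp (1 - lam))"
      using lp by (simp add: field_simps)
    then show "(\<lambda>y. pois lam y * (1 / lam) ^ y) sums (1 / lam * (lam * exp (1 - lam)))"
      using pois_r[of lam "1 / lam"] by simp
    have "1 - (1 - lam) < exp (- (1 - lam))" using assms by (subst exp_minus_greater) simp
    then have "lam < exp (lam - 1)" by simp
    then have "lam * exp (1 - lam) < exp (lam - 1) * exp (1 - lam)"
      by (intro mult_strict_right_mono) auto
    also have "\<dots> = 1" by (simp add: exp_add[symmetric])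
    finally show "lam * exp (1 - lam) < 1" .
  qed (use assms pois_nonneg pois_sums pois_m1 pois_m2 in auto)
  then show ?thesis by blast
qed




definition fp :: "nat \<Rightarrow> nat list \<Rightarrow> bool" where
  "fp m ys \<longleftrightarrow> (\<forall>j<length ys. j < m + sum_list (take j ys)) \<and> m + sum_list ys \<le> length ys"

lemma fp_Nil: "fp m [] \<longleftrightarrow> m = 0" by (simp add: fp_def)

lemma fp_Cons: "fp m (y # r) \<longleftrightarrow> 0 < m \<and> fp (m - 1 + y) r"
proof
  assume h: "fp m (y # r)"
  then have m: "0 < m" unfolding fp_def by force
  have "j < m - 1 + y + sum_list (take j r)" if "j < length r" for j
    using h that m unfolding fp_def by (auto dest!: spec[of _ "Suc j"])
  moreover have "m - 1 + y + sum_list r \<le> length r" using h m by (simp add: fp_def, arith)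
  ultimately show "0 < m \<and> fp (m - 1 + y) r" using m by (simp add: fp_def)
next
  assume h: "0 < m \<and> fp (m - 1 + y) r"
  have "j < m + sum_list (take j (y # r))" if "j < Suc (length r)" for j
  proof (cases j)
    case 0 then show ?thesis using h by simp
  next
    case (Suc j')
    have A: "\<forall>j<length r. j < m - 1 + y + sum_list (take j r)" using h unfolding fp_def by blast
    have "j' < length r" using that Suc by simp
    with A have "j' < m - 1 + y + sum_list (take j' r)" by blast
    then show ?thesis using Suc h by simp
  qed
  moreover have "m + sum_list (y # r) \<le> length (y # r)" using h unfolding fp_def by auto
  ultimately show "fp m (y # r)" unfolding fp_def by auto
qed

lemma fp_bound: "fp m ys \<Longrightarrow> set ys \<subseteq> {..length ys}"
  unfolding fp_def using member_le_sum_list by fastforce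

definition Lset :: "nat \<Rightarrow> nat \<Rightarrow> nat list set" where
  "Lset m n = {ys. length ys = n \<and> fp m ys}"

lemma finite_Lset: "finite (Lset m n)"
proof (rule finite_subset)
  show "Lset m n \<subseteq> {ys. set ys \<subseteq> {..n} \<and> length ys = n}"
    unfolding Lset_def using fp_bound by auto
  show "finite {ys. set ys \<subseteq> {..n} \<and> length ys = n}"
    by (rule finite_lists_length_eq) simp
qed

lemma Lset_Suc: "Lset (Suc m) (Suc n) = (\<lambda>(y, r). y # r) ` (SIGMA y:{..n}. Lset (m + y) n)"
proof (intro equalityI subsetI)
  fix ys assume "ys \<in> Lset (Suc m) (Suc n)"
  then obtain y r where ys: "ys = y # r" and r: "length r = n" "fp (m + y) r"
    unfolding Lset_def by (cases ys) (auto simp: fp_Cons)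
  have "y \<le> n" using r by (simp add: fp_def)
  then show "ys \<in> (\<lambda>(y, r). y # r) ` (SIGMA y:{..n}. Lset (m + y) n)"
    using ys r unfolding Lset_def by force
next
  fix ys assume "ys \<in> (\<lambda>(y, r). y # r) ` (SIGMA y:{..n}. Lset (m + y) n)"
  then show "ys \<in> Lset (Suc m) (Suc n)" unfolding Lset_def by (auto simp: fp_Cons)
qed

lemma W_eq: "(\<Sum>ys\<in>Lset m n. prod_list (map p ys)) = Fp p m n"
proof (induction n arbitrary: m)
  case 0
  have "Lset m 0 = (if m = 0 then {[]} else {})" by (auto simp: Lset_def fp_Nil)
  then show ?case by simp
next
  case (Suc n)
  show ?case
  proof (cases m)
    case 0
    have "Lset m (Suc n) = {}" using 0 by (auto simp: Lset_def fp_def length_Suc_conv)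
    then show ?thesis using 0 by simp
  next
    case (Suc m')
    have inj: "inj_on (\<lambda>(y, r). y # r) (SIGMA y:{..n}. Lset (m' + y) n)"
      by (auto simp: inj_on_def)
    have "(\<Sum>ys\<in>Lset m (Suc n). prod_list (map p ys)) =
          (\<Sum>(y, r)\<in>(SIGMA y:{..n}. Lset (m' + y) n). p y * prod_list (map p r))"
      unfolding Suc Lset_Suc by (subst sum.reindex[OF inj]) (simp add: case_prod_unfold)
    also have "\<dots> = (\<Sum>y\<le>n. p y * (\<Sum>r\<in>Lset (m' + y) n. prod_list (map p r)))"
      by (subst sum.Sigma[symmetric]) (auto simp: finite_Lset sum_distrib_left)
    also have "\<dots> = Fp p m (Suc n)" using Suc.IH by (simp add: Suc)
    finally show ?thesis .
  qed
qed

definition condX :: "nat list \<Rightarrow> bool" where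
  "condX ys \<longleftrightarrow> ys \<noteq> [] \<and> hd ys \<noteq> 0 \<and> sum_list ys \<le> length ys
     \<and> (\<forall>z. 1 \<le> z \<and> z < length ys \<longrightarrow> z < sum_list (take z ys))"

lemma condX_Cons: "condX (y # r) \<longleftrightarrow> 0 < y \<and> fp (y - 1) r"
proof
  assume h: "condX (y # r)"
  then have y: "0 < y" by (simp add: condX_def)
  have "j < y - 1 + sum_list (take j r)" if "j < length r" for j
    using h that y unfolding condX_def by (auto dest!: spec[of _ "Suc j"])
  then show "0 < y \<and> fp (y - 1) r" using h y by (auto simp: condX_def fp_def)
next
  assume h: "0 < y \<and> fp (y - 1) r"
  have "z < sum_list (take z (y # r))" if z1: "1 \<le> z" and z2: "z < Suc (length r)" for z
  proof -
    obtain j where z: "z = Suc j" using z1 by (cases z) auto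
    have A: "\<forall>j<length r. j < y - 1 + sum_list (take j r)" using h unfolding fp_def by blast
    have "j < length r" using z2 z by simp
    with A have "j < y - 1 + sum_list (take j r)" by blast
    then show ?thesis using z h by simp
  qed
  then show "condX (y # r)" using h by (auto simp: condX_def fp_def)
qed

definition Xset :: "nat \<Rightarrow> nat list set" where
  "Xset n = {ys. length ys = Suc n \<and> condX ys}"

lemma Xset_eq: "Xset n = (\<lambda>(y, r). Suc y # r) ` (SIGMA y:{..n}. Lset y n)"
proof (intro equalityI subsetI)
  fix ys assume "ys \<in> Xset n"
  then obtain y r where ys: "ys = y # r" and r: "length r = n" "fp (y - 1) r" and y: "0 < y"
    unfolding Xset_def by (cases ys) (auto simp: condX_Cons)
  have "y - 1 \<le> n" using r by (simp add: fp_def)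
  then show "ys \<in> (\<lambda>(y, r). Suc y # r) ` (SIGMA y:{..n}. Lset y n)"
    using ys r y unfolding Lset_def by (intro image_eqI[of _ _ "(y - 1, r)"]) auto
next
  fix ys assume "ys \<in> (\<lambda>(y, r). Suc y # r) ` (SIGMA y:{..n}. Lset y n)"
  then show "ys \<in> Xset n" unfolding Lset_def Xset_def by (auto simp: condX_Cons)
qed

lemma finite_Xset: "finite (Xset n)"
  unfolding Xset_eq by (auto intro!: finite_Lset)

lemma Xsum: "(\<Sum>ys\<in>Xset n. prod_list (map p ys)) = (\<Sum>y\<le>n. p (Suc y) * Fp p y n)"
proof -
  have inj: "inj_on (\<lambda>(y, r). Suc y # r) (SIGMA y:{..n}. Lset y n)"
    by (auto simp: inj_on_def)
  have "(\<Sum>ys\<in>Xset n. prod_list (map p ys)) =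
        (\<Sum>(y, r)\<in>(SIGMA y:{..n}. Lset y n). p (Suc y) * prod_list (map p r))"
    unfolding Xset_eq by (subst sum.reindex[OF inj]) (simp add: case_prod_unfold)
  also have "\<dots> = (\<Sum>y\<le>n. p (Suc y) * (\<Sum>r\<in>Lset y n. prod_list (map p r)))"
    by (subst sum.Sigma[symmetric]) (auto simp: finite_Lset sum_distrib_left)
  also have "\<dots> = (\<Sum>y\<le>n. p (Suc y) * Fp p y n)" by (simp add: W_eq)
  finally show ?thesis .
qed

lemma prod_list_nth: "prod_list (map f ys) = (\<Prod>i<length ys. f (ys ! i))"
  by (induction ys) (simp_all add: prod.lessThan_Suc_shift del: prod.lessThan_Suc)




definition V :: "(nat \<Rightarrow> 'a \<Rightarrow> nat) \<Rightarrow> nat \<Rightarrow> 'a \<Rightarrow> nat list" where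
  "V Y x \<omega> = map (\<lambda>i. Y (Suc i) \<omega>) [0..<x]"

lemma length_V[simp]: "length (V Y x \<omega>) = x" by (simp add: V_def)

lemma take_V: "z \<le> x \<Longrightarrow> take z (V Y x \<omega>) = V Y z \<omega>"
  by (simp add: V_def take_map)

lemma sum_V: "sum_list (V Y z \<omega>) = (\<Sum>i=1..z. Y i \<omega>)"
proof (induction z)
  case 0 then show ?case by (simp add: V_def)
next
  case (Suc z)
  have "V Y (Suc z) \<omega> = V Y z \<omega> @ [Y (Suc z) \<omega>]" by (simp add: V_def)
  then show ?case using Suc by (simp add: sum.cl_ivl_Suc)
qed

lemma hd_V: "0 < x \<Longrightarrow> hd (V Y x \<omega>) = Y 1 \<omega>"
  by (cases x) (simp_all add: V_def hd_map upt_conv_Cons del: upt_Suc)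

definition hitS :: "(nat \<Rightarrow> 'a \<Rightarrow> nat) \<Rightarrow> 'a \<Rightarrow> nat \<Rightarrow> bool" where
  "hitS Y \<omega> x \<longleftrightarrow> Y 1 \<omega> \<noteq> 0 \<and> (\<Sum>i=1..x. Y i \<omega>) \<le> x \<and> (\<forall>z. 1 \<le> z \<and> z < x \<longrightarrow> z < (\<Sum>i=1..z. Y i \<omega>))"

lemma hitS_V: "hitS Y \<omega> (Suc n) \<longleftrightarrow> V Y (Suc n) \<omega> \<in> Xset n"
proof -
  have ne: "V Y (Suc n) \<omega> \<noteq> []" by (simp add: V_def)
  have "condX (V Y (Suc n) \<omega>) \<longleftrightarrow> hitS Y \<omega> (Suc n)"
    unfolding condX_def hitS_def using ne by (simp add: take_V sum_V hd_V)
  then show ?thesis by (simp add: Xset_def)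
qed

lemma hitS_unique: "hitS Y \<omega> x \<Longrightarrow> hitS Y \<omega> x' \<Longrightarrow> 1 \<le> x \<Longrightarrow> 1 \<le> x' \<Longrightarrow> x = x'"
  unfolding hitS_def by (metis linorder_neqE_nat not_le)




locale xsetup = prob_space M for M :: "'a measure" +
  fixes Y :: "nat \<Rightarrow> 'a \<Rightarrow> nat" and lam :: real
  assumes lam0: "0 \<le> lam" and lam1: "lam < 1"
    and Ymeas: "\<And>i. 1 \<le> i \<Longrightarrow> Y i \<in> measurable M (count_space UNIV)"
    and indep: "indep_vars (\<lambda>_. count_space UNIV) Y {1..}"
    and Ydist: "\<And>i y. 1 \<le> i \<Longrightarrow> measure M {\<omega>\<in>space M. Y i \<omega> = y} = lam ^ y / fact y * exp (- lam)"
begin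

lemma Yset: "1 \<le> i \<Longrightarrow> {\<omega>\<in>space M. Y i \<omega> = c} \<in> events"
proof -
  assume i: "1 \<le> i"
  have "Y i -` {c} \<inter> space M \<in> events" by (rule measurable_sets[OF Ymeas[OF i]]) simp
  moreover have "Y i -` {c} \<inter> space M = {\<omega>\<in>space M. Y i \<omega> = c}" by auto
  ultimately show ?thesis by simp
qed

lemma cyl_eq: "length ys = x \<Longrightarrow> {\<omega>\<in>space M. V Y x \<omega> = ys} = {\<omega>\<in>space M. \<forall>i\<in>{..<x}. Y (Suc i) \<omega> = ys ! i}"
  by (auto simp: V_def list_eq_iff_nth_eq)

lemma cyl_sets: "length ys = x \<Longrightarrow> {\<omega>\<in>space M. V Y x \<omega> = ys} \<in> events"
  unfolding cyl_eq by (intro sets.sets_Collect_finite_All Yset) auto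

lemma cyl_prob:
  assumes len: "length ys = x"
  shows "prob {\<omega>\<in>space M. V Y x \<omega> = ys} = prod_list (map (pois lam) ys)"
proof (cases "x = 0")
  case True
  then have "{\<omega>\<in>space M. V Y x \<omega> = ys} = space M" using len by (auto simp: V_def)
  then show ?thesis using True len by (simp add: prob_space)
next
  case False
  define A where "A j = Y j -` {ys ! (j - 1)} \<inter> space M" for j
  have ind: "indep_sets (\<lambda>i. {Y i -` B \<inter> space M | B. B \<in> sets (count_space UNIV)}) {1..}"
    using indep unfolding indep_vars_def2 by simp
  have "prob (\<Inter>j\<in>Suc ` {..<x}. A j) = (\<Prod>j\<in>Suc ` {..<x}. prob (A j))"
    by (rule indep_setsD[OF ind]) (use False in \<open>auto simp: A_def\<close>)
  moreover have "(\<Inter>j\<in>Suc ` {..<x}. A j) = {\<omega>\<in>space M. V Y x \<omega> = ys}"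
    unfolding cyl_eq[OF len] A_def using False by auto
  moreover have "(\<Prod>j\<in>Suc ` {..<x}. prob (A j)) = (\<Prod>i<x. pois lam (ys ! i))"
  proof -
    have "(\<Prod>j\<in>Suc ` {..<x}. prob (A j)) = (\<Prod>i<x. prob (A (Suc i)))"
      by (subst prod.reindex) auto
    also have "\<dots> = (\<Prod>i<x. pois lam (ys ! i))"
    proof (intro prod.cong refl)
      fix i
      have "A (Suc i) = {\<omega>\<in>space M. Y (Suc i) \<omega> = ys ! i}" by (auto simp: A_def)
      then show "prob (A (Suc i)) = pois lam (ys ! i)" using Ydist[of "Suc i" "ys ! i"] by (simp add: pois_def)
    qed
    finally show ?thesis .
  qed
  ultimately show ?thesis using len by (simp add: prod_list_nth)
qed

definition "Hev n = {\<omega>\<in>space M. hitS Y \<omega> (Suc n)}"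

lemma Hev_eq: "Hev n = (\<Union>ys\<in>Xset n. {\<omega>\<in>space M. V Y (Suc n) \<omega> = ys})"
  unfolding Hev_def hitS_V by auto

lemma Hev_sets: "Hev n \<in> events"
  unfolding Hev_eq using finite_Xset by (intro sets.finite_UN cyl_sets) (auto simp: Xset_def)

lemma Hev_prob: "prob (Hev n) = Hh lam n"
proof -
  have "prob (Hev n) = (\<Sum>ys\<in>Xset n. prob {\<omega>\<in>space M. V Y (Suc n) \<omega> = ys})"
    unfolding Hev_eq using finite_Xset
    by (intro finite_measure_finite_Union) (auto simp: Xset_def cyl_sets disjoint_family_on_def)
  also have "\<dots> = (\<Sum>ys\<in>Xset n. prod_list (map (pois lam) ys))"
    by (intro sum.cong refl cyl_prob) (auto simp: Xset_def)
  also have "\<dots> = Hh lam n" by (simp add: Xsum Hh_def)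
  finally show ?thesis .
qed

definition "E0 = {\<omega>\<in>space M. Y 1 \<omega> = 0}"

lemma E0_sets: "E0 \<in> events" unfolding E0_def by (rule Yset) simp

lemma E0_prob: "prob E0 = exp (- lam)" unfolding E0_def using Ydist[of 1 0] by simp

lemma Hev_disj: "disjoint_family Hev"
  unfolding disjoint_family_on_def Hev_def using hitS_unique by fastforce

lemma E0_Hev_disj: "E0 \<inter> (\<Union>n. Hev n) = {}"
  unfolding E0_def Hev_def hitS_def by auto

lemma Hh_sums: "(\<lambda>n. Hh lam n) sums (1 - exp (- lam))"
proof -
  obtain r \<rho> where g: "gen (pois lam) r \<rho> lam" using gen_pois[OF lam0 lam1] by blast
  show ?thesis unfolding Hh_def
    by (rule gen.first_step(1)[OF g _ spois_sums spois_m1 spois_m2]) (simp add: pois_nonneg lam0)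
qed

lemma UH_prob: "prob (\<Union>n. Hev n) = 1 - exp (- lam)"
proof -
  have "(\<lambda>n. prob (Hev n)) sums prob (\<Union>n. Hev n)"
    by (rule finite_measure_UNION) (auto simp: Hev_sets Hev_disj)
  then show ?thesis using Hh_sums by (simp add: Hev_prob sums_iff)
qed

lemma AE_cover: "AE \<omega> in M. \<omega> \<in> E0 \<union> (\<Union>n. Hev n)"
proof (rule AE_prob_1)
  have "prob (E0 \<union> (\<Union>n. Hev n)) = prob E0 + prob (\<Union>n. Hev n)"
    using E0_Hev_disj Hev_sets E0_sets by (intro finite_measure_Union) auto
  then show "prob (E0 \<union> (\<Union>n. Hev n)) = 1" by (simp add: E0_prob UH_prob)
qed

end



context xsetup begin

definition "Nn = space M - (E0 \<union> (\<Union>n. Hev n))"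
definition "cst = (LEAST z::nat. False)"
definition "Dset a = {\<omega>\<in>space M. decode_slots Y \<omega> = a}"

lemma Nn_sets: "Nn \<in> events"
  unfolding Nn_def using E0_sets Hev_sets by auto

lemma Nn_null: "Nn \<in> null_sets M"
proof -
  have c: "E0 \<union> (\<Union>n. Hev n) \<in> events" using E0_sets Hev_sets by auto
  have "prob (E0 \<union> (\<Union>n. Hev n)) = 1"
  proof -
    have "prob (E0 \<union> (\<Union>n. Hev n)) = prob E0 + prob (\<Union>n. Hev n)"
      using E0_Hev_disj Hev_sets E0_sets by (intro finite_measure_Union) auto
    then show ?thesis by (simp add: E0_prob UH_prob)
  qed
  then have "prob Nn = 0" unfolding Nn_def using prob_compl[OF c] by simp
  then show ?thesis using Nn_sets by (simp add: null_sets_def emeasure_eq_measure)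
qed

lemma hit_least:
  assumes "Y 1 \<omega> \<noteq> 0" "\<exists>z. 1 \<le> z \<and> (\<Sum>i=1..z. Y i \<omega>) \<le> z"
  shows "hitS Y \<omega> (decode_slots Y \<omega>)" "1 \<le> decode_slots Y \<omega>"
proof -
  let ?P = "\<lambda>z. 1 \<le> z \<and> (\<Sum>i=1..z. Y i \<omega>) \<le> z"
  have d: "decode_slots Y \<omega> = (LEAST z. ?P z)" using assms by (simp add: decode_slots_def)
  have P: "?P (LEAST z. ?P z)" using assms(2) by (rule LeastI_ex)
  have "z < (\<Sum>i=1..z. Y i \<omega>)" if "1 \<le> z" "z < (LEAST z. ?P z)" for z
    using not_less_Least[OF that(2)] that(1) by auto
  then show "hitS Y \<omega> (decode_slots Y \<omega>)" using P assms(1) unfolding d hitS_def by auto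
  show "1 \<le> decode_slots Y \<omega>" using P d by simp
qed

lemma dec_pre: "Dset a = (if a = 0 then E0 else {}) \<union> (if 1 \<le> a then Hev (a - 1) else {}) \<union> (if cst = a then Nn else {})"
proof (intro equalityI subsetI)
  fix \<omega> assume w: "\<omega> \<in> Dset a"
  then have sp: "\<omega> \<in> space M" and da: "decode_slots Y \<omega> = a" by (auto simp: Dset_def)
  show "\<omega> \<in> (if a = 0 then E0 else {}) \<union> (if 1 \<le> a then Hev (a - 1) else {}) \<union> (if cst = a then Nn else {})"
  proof (cases "Y 1 \<omega> = 0")
    case True
    then show ?thesis using da sp by (simp add: decode_slots_def E0_def)
  next
    case False
    show ?thesis
    proof (cases "\<exists>z. 1 \<le> z \<and> (\<Sum>i=1..z. Y i \<omega>) \<le> z")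
      case True
      from hit_least[OF False True] da have "hitS Y \<omega> a" "1 \<le> a" by auto
      then have "\<omega> \<in> Hev (a - 1)" using sp by (simp add: Hev_def)
      then show ?thesis using \<open>1 \<le> a\<close> by simp
    next
      case nz: False
      have "(\<lambda>z. 1 \<le> z \<and> (\<Sum>i=1..z. Y i \<omega>) \<le> z) = (\<lambda>z. False)" using nz by auto
      then have "decode_slots Y \<omega> = cst" using False by (simp add: decode_slots_def cst_def)
      moreover have "\<omega> \<in> Nn" using sp False nz unfolding Nn_def E0_def Hev_def hitS_def by auto
      ultimately show ?thesis using da by simp
    qed
  qed
next
  fix \<omega> assume w: "\<omega> \<in> (if a = 0 then E0 else {}) \<union> (if 1 \<le> a then Hev (a - 1) else {}) \<union> (if cst = a then Nn else {})"
  then have sp: "\<omega> \<in> space M" using E0_sets Hev_sets Nn_sets sets.sets_into_space by (auto split: if_splits)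
  have "decode_slots Y \<omega> = a"
  proof -
    consider "a = 0" "\<omega> \<in> E0" | "1 \<le> a" "\<omega> \<in> Hev (a - 1)" | "cst = a" "\<omega> \<in> Nn"
      using w by (auto split: if_splits)
    then show ?thesis
    proof cases
      case 1 then show ?thesis by (simp add: E0_def decode_slots_def)
    next
      case 2
      then have h: "hitS Y \<omega> a" by (simp add: Hev_def)
      then have ex: "Y 1 \<omega> \<noteq> 0" "\<exists>z. 1 \<le> z \<and> (\<Sum>i=1..z. Y i \<omega>) \<le> z"
        using 2 unfolding hitS_def by auto
      show ?thesis using hitS_unique[OF hit_least(1)[OF ex] h hit_least(2)[OF ex] 2(1)] .
    next
      case 3
      then have nE: "\<omega> \<notin> E0" and nH: "\<And>n. \<omega> \<notin> Hev n" by (auto simp: Nn_def)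
      have y1: "Y 1 \<omega> \<noteq> 0" using nE sp by (simp add: E0_def)
      have nz: "\<not> (\<exists>z. 1 \<le> z \<and> (\<Sum>i=1..z. Y i \<omega>) \<le> z)"
      proof
        assume ex: "\<exists>z. 1 \<le> z \<and> (\<Sum>i=1..z. Y i \<omega>) \<le> z"
        have "\<omega> \<in> Hev (decode_slots Y \<omega> - 1)"
          using hit_least[OF y1 ex] sp by (simp add: Hev_def)
        then show False using nH by blast
      qed
      have "(\<lambda>z. 1 \<le> z \<and> (\<Sum>i=1..z. Y i \<omega>) \<le> z) = (\<lambda>z. False)" using nz by auto
      then show ?thesis using y1 3 by (simp add: decode_slots_def cst_def)
    qed
  qed
  then show "\<omega> \<in> Dset a" using sp by (simp add: Dset_def)
qed

lemma Dset_sets: "Dset a \<in> events"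
  unfolding dec_pre using E0_sets Hev_sets Nn_sets by auto

lemma D_meas: "decode_slots Y \<in> measurable M (count_space UNIV)"
proof (subst measurable_count_space_eq_countable)
  show "decode_slots Y \<in> space M \<rightarrow> UNIV \<and> (\<forall>a\<in>UNIV. decode_slots Y -` {a} \<inter> space M \<in> sets M)"
  proof (intro conjI ballI)
    fix a :: nat
    have "decode_slots Y -` {a} \<inter> space M = Dset a" by (auto simp: Dset_def)
    then show "decode_slots Y -` {a} \<inter> space M \<in> sets M" using Dset_sets by simp
  qed simp
qed simp

definition "piv a = (if a = 0 then exp (- lam) else Hh lam (a - 1))"

lemma Dset_prob: "prob (Dset a) = piv a"
proof -
  let ?A = "(if a = 0 then E0 else {}) \<union> (if 1 \<le> a then Hev (a - 1) else {})"
  have A: "?A \<in> events" using E0_sets Hev_sets by auto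
  have B: "(if cst = a then Nn else {}) \<in> null_sets M" using Nn_null by auto
  have "prob (Dset a) = prob ?A" unfolding dec_pre by (rule measure_Un_null_set[OF A B])
  also have "\<dots> = piv a" by (cases a) (simp_all add: piv_def E0_prob Hev_prob)
  finally show ?thesis .
qed

end



lemma alg1: "(lam::real) \<noteq> 1 \<Longrightarrow> (1 - e) + 1/(1-lam) * (lam - (1 - e)) = lam/(1-lam) * e"
proof -
  assume "lam \<noteq> 1" then have d: "1 - lam \<noteq> 0" by simp
  show ?thesis using d by (simp add: field_simps)
qed
lemma alg2: "(lam::real) \<noteq> 1 \<Longrightarrow> (1 - e) + (2*(1/(1-lam)) + 1/(1-lam)^3) * (lam - (1-e)) + (1/(1-lam))^2 * (lam^2 - 2*(lam - (1-e))) = (1 - lam + lam^2)/(1-lam)^2 * (lam/(1-lam) * e)"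
proof -
  assume "lam \<noteq> 1" then have d: "1 - lam \<noteq> 0" by simp
  define dd where "dd = 1 - lam"
  have l: "lam = 1 - dd" by (simp add: dd_def)
  have d': "dd \<noteq> 0" using d by (simp add: dd_def)
  have poly: "(1-e)*dd^3 + (2*dd^2 + 1)*((1 - dd) - (1-e)) + dd*((1 - dd)^2 - 2*((1 - dd)-(1-e))) = (1 - (1 - dd) + (1 - dd)^2)*(1 - dd)*e"
    by (simp add: power2_eq_square power3_eq_cube algebra_simps)
  have "(1 - e) + (2*(1/dd) + 1/dd^3) * ((1 - dd) - (1-e)) + (1/dd)^2 * ((1 - dd)^2 - 2*((1 - dd) - (1-e)))
      = ((1-e)*dd^3 + (2*dd^2 + 1)*((1 - dd) - (1-e)) + dd*((1 - dd)^2 - 2*((1 - dd)-(1-e)))) / dd^3"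
    using d' by (simp add: field_simps power2_eq_square power3_eq_cube)
  also have "\<dots> = (1 - (1 - dd) + (1 - dd)^2)/dd^2 * ((1 - dd)/dd * e)"
    unfolding poly using d' by (simp add: power2_eq_square power3_eq_cube)
  finally show ?thesis unfolding dd_def by simp
qed

context xsetup begin

lemma g_meas: "(\<lambda>\<omega>. g (decode_slots Y \<omega>) :: real) \<in> borel_measurable M"
  by (rule measurable_compose[OF D_meas]) simp

lemma nn_int:
  assumes g0: "\<And>a. 0 \<le> g a"
  shows "(\<integral>\<^sup>+\<omega>. ennreal (g (decode_slots Y \<omega>)) \<partial>M) = (\<Sum>a. ennreal (g a * piv a))"
proof -
  have pw: "ennreal (g (decode_slots Y \<omega>)) = (\<Sum>a. ennreal (g a) * indicator (Dset a) \<omega>)"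
    if "\<omega> \<in> space M" for \<omega>
  proof -
    have "(\<Sum>a. ennreal (g a) * indicator (Dset a) \<omega>) = (\<Sum>a\<in>{decode_slots Y \<omega>}. ennreal (g a) * indicator (Dset a) \<omega>)"
      by (rule suminf_finite) (auto simp: Dset_def indicator_def)
    also have "\<dots> = ennreal (g (decode_slots Y \<omega>))" using that by (simp add: Dset_def)
    finally show ?thesis ..
  qed
  have "(\<integral>\<^sup>+\<omega>. ennreal (g (decode_slots Y \<omega>)) \<partial>M) = (\<integral>\<^sup>+\<omega>. (\<Sum>a. ennreal (g a) * indicator (Dset a) \<omega>) \<partial>M)"
    by (intro nn_integral_cong) (simp add: pw)
  also have "\<dots> = (\<Sum>a. \<integral>\<^sup>+\<omega>. ennreal (g a) * indicator (Dset a) \<omega> \<partial>M)"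
    by (rule nn_integral_suminf)
       (rule borel_measurable_times_ennreal[OF borel_measurable_const borel_measurable_indicator[OF Dset_sets]])
  also have "\<dots> = (\<Sum>a. ennreal (g a * piv a))"
  proof (intro suminf_cong)
    fix a
    have "piv a \<ge> 0" using Dset_prob[of a] measure_nonneg[of M "Dset a"] by simp
    then show "(\<integral>\<^sup>+\<omega>. ennreal (g a) * indicator (Dset a) \<omega> \<partial>M) = ennreal (g a * piv a)"
      using g0 by (simp add: nn_integral_cmult_indicator Dset_sets emeasure_eq_measure Dset_prob ennreal_mult)
  qed
  finally show ?thesis .
qed

lemma int_facts:
  assumes g0: "\<And>a. 0 \<le> g a" and gs: "(\<lambda>a. g a * piv a) sums S"
  shows "integrable M (\<lambda>\<omega>. g (decode_slots Y \<omega>))" "(\<integral>\<omega>. g (decode_slots Y \<omega>) \<partial>M) = S"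
proof -
  have piv0: "0 \<le> piv a" for a using Dset_prob[of a] measure_nonneg[of M "Dset a"] by simp
  have S0: "0 \<le> S"
  proof -
    have "0 \<le> (\<Sum>a. g a * piv a)" using gs g0 piv0 by (intro suminf_nonneg) (auto simp: sums_iff)
    then show ?thesis using gs by (simp add: sums_iff)
  qed
  have nn: "(\<integral>\<^sup>+\<omega>. ennreal (g (decode_slots Y \<omega>)) \<partial>M) = ennreal S"
  proof -
    have "(\<Sum>a. ennreal (g a * piv a)) = ennreal S"
      by (rule suminf_ennreal_eq[OF _ gs]) (simp add: g0 piv0)
    then show ?thesis using nn_int[of g] g0 by simp
  qed
  show "integrable M (\<lambda>\<omega>. g (decode_slots Y \<omega>))"
    by (rule integrableI_nn_integral_finite[OF g_meas _ nn]) (simp add: g0)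
  have "(\<integral>\<omega>. g (decode_slots Y \<omega>) \<partial>M) = enn2real (\<integral>\<^sup>+\<omega>. ennreal (g (decode_slots Y \<omega>)) \<partial>M)"
    by (rule integral_eq_nn_integral[OF g_meas]) (simp add: g0)
  then show "(\<integral>\<omega>. g (decode_slots Y \<omega>) \<partial>M) = S" using nn S0 by simp
qed

lemma piv_Suc: "piv (Suc n) = Hh lam n" by (simp add: piv_def)

lemma moments:
  shows "(\<lambda>a. real a * piv a) sums (lam / (1 - lam) * exp (- lam))"
    and "(\<lambda>a. real a ^ 2 * piv a) sums ((1 - lam + lam ^ 2) / (1 - lam) ^ 2 * (lam / (1 - lam) * exp (- lam)))"
proof -
  obtain r \<rho> where g: "gen (pois lam) r \<rho> lam" using gen_pois[OF lam0 lam1] by blast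
  have q0: "\<And>y. 0 \<le> pois lam (Suc y)" by (simp add: pois_nonneg lam0)
  note fs = gen.first_step[OF g q0 spois_sums spois_m1 spois_m2]
  note mu = gen.mu_val[OF g] and nu = gen.nu_val[OF g]
  have d: "1 - lam \<noteq> 0" using lam1 by simp
  let ?e = "exp (- lam)"
  have "(\<lambda>n. (real n + 1) * Hh lam n) sums ((1 - ?e) + 1 / (1 - lam) * (lam - (1 - ?e)))"
    using fs(2) unfolding mu by (simp add: Hh_def)
  also have "(1 - ?e) + 1 / (1 - lam) * (lam - (1 - ?e)) = lam / (1 - lam) * ?e"
    using lam1 by (intro alg1) simp
  finally have s1: "(\<lambda>n. real (Suc n) * piv (Suc n)) sums (lam / (1 - lam) * ?e)"
    by (simp add: piv_Suc add.commute)
  then show "(\<lambda>a. real a * piv a) sums (lam / (1 - lam) * ?e)"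
    by (subst (asm) sums_Suc_iff) simp
  have "(\<lambda>n. (real n + 1)^2 * Hh lam n) sums
     ((1 - ?e) + (2 * (1 / (1 - lam)) + 1 / (1 - lam) ^ 3) * (lam - (1 - ?e))
       + (1 / (1 - lam))^2 * (lam ^ 2 - 2 * (lam - (1 - ?e))))"
    using fs(3) unfolding mu nu by (simp add: Hh_def)
  also have "(1 - ?e) + (2 * (1 / (1 - lam)) + 1 / (1 - lam) ^ 3) * (lam - (1 - ?e))
       + (1 / (1 - lam))^2 * (lam ^ 2 - 2 * (lam - (1 - ?e)))
     = (1 - lam + lam ^ 2) / (1 - lam) ^ 2 * (lam / (1 - lam) * ?e)"
    using lam1 by (intro alg2) simp
  finally have s2: "(\<lambda>n. real (Suc n) ^ 2 * piv (Suc n)) sums ((1 - lam + lam ^ 2) / (1 - lam) ^ 2 * (lam / (1 - lam) * ?e))"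
    by (simp add: piv_Suc add.commute)
  then show "(\<lambda>a. real a ^ 2 * piv a) sums ((1 - lam + lam ^ 2) / (1 - lam) ^ 2 * (lam / (1 - lam) * ?e))"
    by (subst (asm) sums_Suc_iff) simp
qed

lemma piv_formula: "piv x = (if x = 0 then exp (- lam)
           else if x = 1 then lam * exp (- lam)
           else real (x - 1) ^ (x - 2) / (real x * fact (x - 2)) * lam ^ x * exp (- real x * lam))"
proof -
  consider "x = 0" | "x = 1" | "2 \<le> x" by linarith
  then show ?thesis
  proof cases
    case 1 then show ?thesis by (simp add: piv_def)
  next
    case 2 then show ?thesis by (simp add: piv_def Hh_0)
  next
    case c3: 3
    define n where "n = x - 1"
    have 3: "x = Suc n" "1 \<le> n" using c3 by (auto simp: n_def)
    have "piv x = real n ^ n / fact (Suc n) * (lam ^ Suc n * exp (- real (Suc n) * lam))"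
      using 3 by (simp add: piv_def Hh_pos)
    also have "real n ^ n / fact (Suc n) = real (Suc n - 1) ^ (Suc n - 2) / (real (Suc n) * fact (Suc n - 2))"
      by (rule pi_formula[OF 3(2)])
    finally show ?thesis using 3 by (simp only: mult.assoc) simp
  qed
qed

end

theorem theorem2:
  fixes M :: "'a measure" and Y :: "nat \<Rightarrow> 'a \<Rightarrow> nat" and lam :: real
  assumes "prob_space M"
    and "0 \<le> lam" and "lam < 1"
    and "\<And>i. 1 \<le> i \<Longrightarrow> Y i \<in> measurable M (count_space UNIV)"
    and "prob_space.indep_vars M (\<lambda>_. count_space UNIV) Y {1..}"
    and "\<And>i y. 1 \<le> i \<Longrightarrow>
           measure M {\<omega>\<in>space M. Y i \<omega> = y} = lam ^ y / fact y * exp (- lam)"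
  shows "(AE \<omega> in M. Y 1 \<omega> \<noteq> 0 \<longrightarrow> (\<exists>z\<ge>1. (\<Sum>i=1..z. Y i \<omega>) \<le> z))
    \<and> (\<forall>x::nat. measure M {\<omega>\<in>space M. decode_slots Y \<omega> = x} =
          (if x = 0 then exp (- lam)
           else if x = 1 then lam * exp (- lam)
           else real (x - 1) ^ (x - 2) / (real x * fact (x - 2)) * lam ^ x * exp (- real x * lam)))
    \<and> integrable M (\<lambda>\<omega>. real (decode_slots Y \<omega>) ^ 2)
    \<and> integrable M (\<lambda>\<omega>. real (decode_slots Y \<omega>))
    \<and> (\<integral>\<omega>. real (decode_slots Y \<omega>) \<partial>M) = lam / (1 - lam) * exp (- lam)
    \<and> (\<integral>\<omega>. real (decode_slots Y \<omega>) ^ 2 \<partial>M) =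
        (1 - lam + lam ^ 2) / (1 - lam) ^ 2 * (\<integral>\<omega>. real (decode_slots Y \<omega>) \<partial>M)"
proof -
  interpret xsetup M Y lam
    by (intro xsetup.intro xsetup_axioms.intro assms)
  have ae: "AE \<omega> in M. Y 1 \<omega> \<noteq> 0 \<longrightarrow> (\<exists>z\<ge>1. (\<Sum>i=1..z. Y i \<omega>) \<le> z)"
    using AE_cover
  proof eventually_elim
    case (elim \<omega>)
    then show ?case unfolding E0_def Hev_def hitS_def by auto
  qed
  have dist: "\<forall>x::nat. measure M {\<omega>\<in>space M. decode_slots Y \<omega> = x} =
          (if x = 0 then exp (- lam)
           else if x = 1 then lam * exp (- lam)
           else real (x - 1) ^ (x - 2) / (real x * fact (x - 2)) * lam ^ x * exp (- real x * lam))"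
    using Dset_prob piv_formula by (simp add: Dset_def)
  note i1 = int_facts[of "\<lambda>a. real a", OF _ moments(1)]
  note i2 = int_facts[of "\<lambda>a. real a ^ 2", OF _ moments(2)]
  show ?thesis using ae dist i1 i2 by simp
qed


end
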